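(* Let $A^1,\dots,A^n:[0,T]\times\mathbb R^n\to\mathbb C^{m\times m}$ be Hermitian-matrix-valued functions such that $\|A^j(t,x)\|_{\mathrm{op}}\le C$ for all $j$ and all $(t,x)$ with $|x|\ge R_A$, where $C\ge 0$, $R_A>0$. Let $T>0$ and let $\mathcal L$ be the standard lens of thickness $T$ with radii $R_1\ge R_A$ and $R_2\ge R_1+T(1+2\sqrt n\,C)$. Then for every $\Theta\in(0,1]$ the slice $\mathcal H_\Theta$ has a unit normal vector field $\nu_\Theta=(\nu_\Theta^0,\nu_\Theta^1,\dots,\nu_\Theta^n)$ (defined almost everywhere on $\mathcal H_\Theta$, pointing outwards with respect to $\mathcal L_\Theta$) such that $$\langle\eta,\sigma(t,x;\nu_\Theta(t,x))\eta\rangle\ \ge\ \tfrac12|\eta|^2\quad\text{for all }(t,x)\in\mathcal H_\Theta,\ \Theta\in(0,1],\ \eta\in\mathbb R^m .$$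
   Context: The principal symbol is $\sigma(t,x;\tau,\xi)=\tau\,\mathbb I_m+\sum_{j=1}^n A^j(t,x)\xi_j$ for $(\tau,\xi)\in\mathbb R^{1+n}$; $\langle\cdot,\cdot\rangle$ is the standard scalar product on $\mathbb C^m$, $\|\cdot\|_{\mathrm{op}}$ the operator norm. Standard lens: with $B_{R_2}$ the closed ball of radius $R_2$ about $0$ in $\mathbb R^n$, let $\psi:[0,1]\times B_{R_2}\to\mathbb R^{n+1}$, $\psi(\Theta,y)=(\Theta T,y)$ if $|y|\le R_1$, $\psi(\Theta,y)=(\Theta T\frac{R_2-|y|}{R_2-R_1},y)$ if $|y|>R_1$; the lens is $\mathcal L=\psi([0,1]\times B_{R_2})$, slices $\mathcal H_\Theta=\psi(\Theta,B_{R_2})$, partial lenses $\mathcal L_\Theta=\bigcup_{0\le\tau\le\Theta}\mathcal H_\tau$. *)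

theory Defs
  imports "HOL-Analysis.Analysis"
begin

definition hermitian :: "complex^'m^'m \<Rightarrow> bool" where
  "hermitian M \<longleftrightarrow> (\<forall>i j. M $ i $ j = cnj (M $ j $ i))"

definition cinner :: "complex^'m \<Rightarrow> complex^'m \<Rightarrow> complex" where
  "cinner u v = (\<Sum>i\<in>UNIV. cnj (u $ i) * v $ i)"

definition cvec :: "real^'m \<Rightarrow> complex^'m" where
  "cvec \<eta> = (\<chi> i. complex_of_real (\<eta> $ i))"

definition symb ::
  "('n::finite \<Rightarrow> real \<Rightarrow> real^'n \<Rightarrow> complex^'m^'m) \<Rightarrow> real \<Rightarrow> real^'n \<Rightarrow> real \<times> (real^'n)
     \<Rightarrow> complex^'m^'m" where
  "symb A t x v = fst v *\<^sub>R mat 1 + (\<Sum>j\<in>UNIV. (snd v $ j) *\<^sub>R A j t x)"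

definition lens_psi :: "real \<Rightarrow> real \<Rightarrow> real \<Rightarrow> real \<Rightarrow> real^'n \<Rightarrow> real \<times> (real^'n)" where
  "lens_psi T R1 R2 \<Theta> y =
     (if norm y \<le> R1 then \<Theta> * T else \<Theta> * T * (R2 - norm y) / (R2 - R1), y)"

definition lens_slice :: "real \<Rightarrow> real \<Rightarrow> real \<Rightarrow> real \<Rightarrow> (real \<times> (real^'n)) set" where
  "lens_slice T R1 R2 \<Theta> = lens_psi T R1 R2 \<Theta> ` cball 0 R2"

definition lens_part :: "real \<Rightarrow> real \<Rightarrow> real \<Rightarrow> real \<Rightarrow> (real \<times> (real^'n)) set" where
  "lens_part T R1 R2 \<Theta> = (\<Union>\<tau>\<in>{0..\<Theta>}. lens_slice T R1 R2 \<tau>)"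

definition points_outward :: "('a::real_vector) set \<Rightarrow> 'a \<Rightarrow> 'a \<Rightarrow> bool" where
  "points_outward S p v \<longleftrightarrow>
     (\<exists>\<epsilon>>0. \<forall>s. 0 < s \<and> s < \<epsilon> \<longrightarrow> p + s *\<^sub>R v \<notin> S \<and> p - s *\<^sub>R v \<in> S)"

end

theory Submission
  imports Defs
begin


lemma re_cinner: "Re (cinner u v) = inner u v"
  unfolding cinner_def inner_vec_def inner_complex_def by (simp add: Re_sum)

lemma hermitian_symb:
  assumes "\<forall>j. hermitian (A j t x)"
  shows "hermitian (symb A t x v)"
proof -
  have h: "cnj (A j t x $ k $ i) = A j t x $ i $ k" for j i k
    using assms unfolding hermitian_def by (metis complex_cnj_cnj)
  show ?thesis unfolding hermitian_def symb_def
    by (simp add: mat_def vector_scaleR_component cnj_sum h complex_cnj_scaleR)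
qed

lemma cinner_herm_real:
  assumes "hermitian M"
  shows "cinner u (M *v u) \<in> \<real>"
proof -
  have h: "cnj (M $ i $ j) = M $ j $ i" for i j
    using assms unfolding hermitian_def by (metis complex_cnj_cnj)
  have e: "cinner u (M *v u) = (\<Sum>i\<in>UNIV. \<Sum>j\<in>UNIV. cnj (u$i) * M$i$j * u$j)"
    unfolding cinner_def matrix_vector_mult_def by (simp add: sum_distrib_left mult.assoc)
  have "cnj (\<Sum>i\<in>UNIV. \<Sum>j\<in>UNIV. cnj (u$i) * M$i$j * u$j) = (\<Sum>i\<in>UNIV. \<Sum>j\<in>UNIV. u$i * M$j$i * cnj (u$j))"
    by (simp only: cnj_sum complex_cnj_mult complex_cnj_cnj h)
  also have "\<dots> = (\<Sum>j\<in>UNIV. \<Sum>i\<in>UNIV. u$i * M$j$i * cnj (u$j))" by (rule sum.swap)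
  also have "\<dots> = (\<Sum>i\<in>UNIV. \<Sum>j\<in>UNIV. cnj (u$i) * M$i$j * u$j)" by (simp add: mult_ac)
  finally have "cnj (cinner u (M *v u)) = cinner u (M *v u)" unfolding e .
  then show ?thesis using Reals_cnj_iff by blast
qed

lemma norm_cvec: "norm (cvec \<eta>) = norm \<eta>"
  unfolding norm_vec_def cvec_def by simp

lemma sum_mvmult: "(\<Sum>j\<in>S. M j) *v u = (\<Sum>j\<in>S. M j *v u)"
  by (induction S rule: infinite_finite_induct) (simp_all add: matrix_vector_mult_add_rdistrib)

lemma scaleR_mv: "(r *\<^sub>R M) *v u = r *\<^sub>R (M *v (u::'a::real_algebra_1^'n))"
  by (simp add: vec_eq_iff matrix_vector_mult_def scaleR_sum_right)

lemma symb_mult: "symb A t x v *v u = fst v *\<^sub>R u + (\<Sum>j\<in>UNIV. (snd v $ j) *\<^sub>R (A j t x *v u))"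
  unfolding symb_def
  by (simp add: matrix_vector_mult_add_rdistrib scaleR_mv
     sum_mvmult)

lemma quad_bound:
  fixes A :: "'n::finite \<Rightarrow> real \<Rightarrow> real^'n \<Rightarrow> complex^'m::finite^'m"
  assumes herm: "\<forall>j. hermitian (A j t x)" and C: "C \<ge> 0"
    and bnd: "snd v = 0 \<or> (\<forall>j. onorm (\<lambda>w. A j t x *v w) \<le> C)"
    and ab: "fst v - C * (\<Sum>j\<in>UNIV. \<bar>snd v $ j\<bar>) \<ge> 1/2"
  shows "cinner (cvec \<eta>) (symb A t x v *v cvec \<eta>) \<in> \<real> \<and>
     Re (cinner (cvec \<eta>) (symb A t x v *v cvec \<eta>)) \<ge> 1/2 * (norm \<eta>)\<^sup>2"
proof
  show "cinner (cvec \<eta>) (symb A t x v *v cvec \<eta>) \<in> \<real>"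
    by (rule cinner_herm_real, rule hermitian_symb, rule herm)
  define u where "u = cvec \<eta>"
  have nu: "norm u = norm \<eta>" unfolding u_def by (rule norm_cvec)
  have re: "Re (cinner u (symb A t x v *v u)) = fst v * (norm \<eta>)\<^sup>2 + (\<Sum>j\<in>UNIV. snd v $ j * (u \<bullet> (A j t x *v u)))"
    proof -
    have "u \<bullet> u = (norm \<eta>)\<^sup>2" using nu by (metis power2_norm_eq_inner)
    then show ?thesis unfolding re_cinner symb_mult by (simp add: inner_add_right inner_sum_right)
  qed
  have trm: "snd v $ j * (u \<bullet> (A j t x *v u)) \<ge> - (\<bar>snd v $ j\<bar> * C * (norm \<eta>)\<^sup>2)" for j
  proof (cases "snd v = 0")
    case True then show ?thesis by simp
  next
    case False
    with bnd have oj: "onorm (\<lambda>w. A j t x *v w) \<le> C" by auto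
    have "norm (A j t x *v u) \<le> onorm (\<lambda>w. A j t x *v w) * norm u"
      by (rule onorm) simp
    also have "\<dots> \<le> C * norm u" by (rule mult_right_mono[OF oj], simp)
    finally have a: "norm (A j t x *v u) \<le> C * norm u" .
    have "\<bar>u \<bullet> (A j t x *v u)\<bar> \<le> norm u * norm (A j t x *v u)" by (rule Cauchy_Schwarz_ineq2)
    also have "\<dots> \<le> norm u * (C * norm u)" by (rule mult_left_mono[OF a], simp)
    finally have b: "\<bar>u \<bullet> (A j t x *v u)\<bar> \<le> C * (norm \<eta>)\<^sup>2" by (simp add: nu power2_eq_square mult_ac)
    have "\<bar>snd v $ j * (u \<bullet> (A j t x *v u))\<bar> \<le> \<bar>snd v $ j\<bar> * (C * (norm \<eta>)\<^sup>2)"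
      unfolding abs_mult by (rule mult_left_mono[OF b], simp)
    then show ?thesis by (simp add: abs_le_iff mult.assoc)
  qed
  have "(\<Sum>j\<in>UNIV. snd v $ j * (u \<bullet> (A j t x *v u))) \<ge> (\<Sum>j\<in>UNIV. - (\<bar>snd v $ j\<bar> * C * (norm \<eta>)\<^sup>2))"
    by (rule sum_mono, rule trm)
  also have "(\<Sum>j\<in>UNIV. - (\<bar>snd v $ j\<bar> * C * (norm \<eta>)\<^sup>2)) = - (C * (\<Sum>j\<in>UNIV. \<bar>snd v $ j\<bar>)) * (norm \<eta>)\<^sup>2"
    by (simp add: sum_negf sum_distrib_right sum_distrib_left mult_ac)
  finally have s: "(\<Sum>j\<in>UNIV. snd v $ j * (u \<bullet> (A j t x *v u))) \<ge> - (C * (\<Sum>j\<in>UNIV. \<bar>snd v $ j\<bar>)) * (norm \<eta>)\<^sup>2" .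
  have "1/2 * (norm \<eta>)\<^sup>2 \<le> (fst v - C * (\<Sum>j\<in>UNIV. \<bar>snd v $ j\<bar>)) * (norm \<eta>)\<^sup>2"
    by (rule mult_right_mono[OF ab], simp)
  also have "\<dots> \<le> Re (cinner u (symb A t x v *v u))" using s unfolding re by (simp add: algebra_simps)
  finally show "Re (cinner (cvec \<eta>) (symb A t x v *v cvec \<eta>)) \<ge> 1/2 * (norm \<eta>)\<^sup>2" unfolding u_def .
qed



lemma mem_lens_part:
  "((t, y) \<in> lens_part T R1 R2 \<Theta>) \<longleftrightarrow> norm y \<le> R2 \<and>
    (\<exists>\<tau>\<in>{0..\<Theta>}. t = (if norm y \<le> R1 then \<tau>*T else \<tau>*T*(R2 - norm y)/(R2-R1)))"
  unfolding lens_part_def lens_slice_def lens_psi_def by (auto simp: image_iff)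

lemma sum_abs_le: "(\<Sum>j\<in>UNIV. \<bar>y $ j\<bar>) \<le> sqrt (real CARD('n::finite)) * norm (y::real^'n)"
proof -
  note L2_set_mult_ineq[of "\<lambda>_. 1::real" "\<lambda>j. y $ j" UNIV]
  moreover have "L2_set (\<lambda>j. y $ j) UNIV = norm y" unfolding norm_vec_def L2_set_def by simp
  ultimately show ?thesis by (simp add: L2_set_constant)
qed

lemma sphere_null: "sphere (0::'a::euclidean_space) r \<in> null_sets lborel"
  using negligible_sphere[of "0::'a" r]
  by (auto simp: null_sets_completion_iff negligible_iff_null_sets negligible_convex_frontier)



lemma main_fixed:
  fixes A :: "'n::finite \<Rightarrow> real \<Rightarrow> real^'n \<Rightarrow> complex^'m::finite^'m"
    and T C RA R1 R2 :: real
  assumes herm: "\<forall>j t x. t \<in> {0..T} \<longrightarrow> hermitian (A j t x)"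
    and bound: "\<forall>j t x. t \<in> {0..T} \<and> norm x \<ge> RA \<longrightarrow> onorm (\<lambda>v. A j t x *v v) \<le> C"
    and C: "C \<ge> 0" and RA: "RA > 0" and T: "T > 0"
    and R1: "R1 \<ge> RA"
    and R2: "R2 \<ge> R1 + T * (1 + 2 * sqrt (real CARD('n)) * C)"
    and Th: "0 < \<Theta>" "\<Theta> \<le> 1"
  shows "\<exists>\<nu> :: real \<times> (real^'n) \<Rightarrow> real \<times> (real^'n). \<exists>E :: (real^'n) set.
           E \<in> null_sets lborel \<and>
           (\<forall>y \<in> cball 0 R2 - E.
              let p = lens_psi T R1 R2 \<Theta> y in
              (\<exists>D. (lens_psi T R1 R2 \<Theta> has_derivative D) (at y) \<and> (\<forall>w. inner (\<nu> p) (D w) = 0))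
              \<and> norm (\<nu> p) = 1
              \<and> points_outward (lens_part T R1 R2 \<Theta>) p (\<nu> p)
              \<and> (\<forall>\<eta> :: real^'m.
                   cinner (cvec \<eta>) (symb A (fst p) (snd p) (\<nu> p) *v cvec \<eta>) \<in> \<real> \<and>
                   Re (cinner (cvec \<eta>) (symb A (fst p) (snd p) (\<nu> p) *v cvec \<eta>)) \<ge> 1/2 * (norm \<eta>)\<^sup>2))"
proof -
  define s where "s = sqrt (real CARD('n)) * C"
  have s0: "s \<ge> 0" unfolding s_def using C by simp
  have R12: "R2 - R1 \<ge> T * (1 + 2 * s)" using R2 unfolding s_def by (simp add: mult.assoc)
  have T12: "T * (1 + 2 * s) \<ge> T" using T s0 by simp
  have R12p: "R2 - R1 > 0" using R12 T12 T by linarith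
  define k where "k = \<Theta> * T / (R2 - R1)"
  have k0: "k > 0" unfolding k_def using Th T R12p by simp
  have k1: "k * (1 + 2 * s) \<le> 1"
  proof -
    have "k * (1 + 2 * s) = \<Theta> * (T * (1 + 2 * s)) / (R2 - R1)" unfolding k_def by simp
    also have "\<dots> \<le> 1 * (R2 - R1) / (R2 - R1)"
      using R12 Th R12p s0 T by (intro divide_right_mono mult_mono) auto
    finally show ?thesis using R12p by simp
  qed
  define N where "N = sqrt (1 + k\<^sup>2)"
  have N1: "N \<ge> 1" unfolding N_def by simp
  have NN: "N\<^sup>2 = 1 + k\<^sup>2" unfolding N_def by (simp add: add_nonneg_nonneg)
  have Nk: "N \<le> 1 + k"
  proof -
    have "N \<le> sqrt ((1 + k)\<^sup>2)" unfolding N_def using k0 by (intro real_sqrt_le_mono) (simp add: power2_eq_square algebra_simps)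
    then show ?thesis using k0 by simp
  qed
  define \<nu>y where "\<nu>y y = (if norm y \<le> R1 then (1::real, 0::real^'n) else (1/N, (k/(N*norm y)) *\<^sub>R y))" for y :: "real^'n"
  define \<nu> where "\<nu> p = \<nu>y (snd p)" for p :: "real \<times> (real^'n)"
  define E where "E = sphere (0::real^'n) R1 \<union> sphere 0 R2"
  have En: "E \<in> null_sets lborel" unfolding E_def using sphere_null by blast
  have psi_flat: "lens_psi T R1 R2 \<Theta> y = (\<Theta>*T, y)" if "norm y \<le> R1" for y :: "real^'n"
    using that unfolding lens_psi_def by simp
  have psi_slope: "lens_psi T R1 R2 \<Theta> y = (k*(R2 - norm y), y)" if "norm y > R1" for y :: "real^'n"
    using that unfolding lens_psi_def k_def by simp
  have "\<forall>y \<in> cball 0 R2 - E.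
              let p = lens_psi T R1 R2 \<Theta> y in
              (\<exists>D. (lens_psi T R1 R2 \<Theta> has_derivative D) (at y) \<and> (\<forall>w. inner (\<nu> p) (D w) = 0))
              \<and> norm (\<nu> p) = 1
              \<and> points_outward (lens_part T R1 R2 \<Theta>) p (\<nu> p)
              \<and> (\<forall>\<eta> :: real^'m.
                   cinner (cvec \<eta>) (symb A (fst p) (snd p) (\<nu> p) *v cvec \<eta>) \<in> \<real> \<and>
                   Re (cinner (cvec \<eta>) (symb A (fst p) (snd p) (\<nu> p) *v cvec \<eta>)) \<ge> 1/2 * (norm \<eta>)\<^sup>2)"
  (is ?MAIN)
  proof
    fix y :: "real^'n"
    assume y: "y \<in> cball 0 R2 - E"
    have ym: "y \<in> cball 0 R2" "y \<notin> sphere 0 R1" "y \<notin> sphere 0 R2" using y unfolding E_def by blast+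
    have yR2: "norm y < R2" using ym(1,3) unfolding mem_cball_0 mem_sphere_0 by linarith
    have yR1: "norm y \<noteq> R1" using ym(2) unfolding mem_sphere_0 by blast
    show "let p = lens_psi T R1 R2 \<Theta> y in
              (\<exists>D. (lens_psi T R1 R2 \<Theta> has_derivative D) (at y) \<and> (\<forall>w. inner (\<nu> p) (D w) = 0))
              \<and> norm (\<nu> p) = 1
              \<and> points_outward (lens_part T R1 R2 \<Theta>) p (\<nu> p)
              \<and> (\<forall>\<eta> :: real^'m.
                   cinner (cvec \<eta>) (symb A (fst p) (snd p) (\<nu> p) *v cvec \<eta>) \<in> \<real> \<and>
                   Re (cinner (cvec \<eta>) (symb A (fst p) (snd p) (\<nu> p) *v cvec \<eta>)) \<ge> 1/2 * (norm \<eta>)\<^sup>2)"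
    proof (cases "norm y < R1")
      case True
      have p: "lens_psi T R1 R2 \<Theta> y = (\<Theta>*T, y)" using True by (intro psi_flat) simp
      have nu: "\<nu> (\<Theta>*T, y) = (1, 0)" unfolding \<nu>_def \<nu>y_def using True by simp
      have der: "(lens_psi T R1 R2 \<Theta> has_derivative (\<lambda>w. (0, w))) (at y)"
      proof (rule has_derivative_transform_within_open[where s="ball 0 R1" and f="\<lambda>y. (\<Theta>*T, y)"])
        show "((\<lambda>y. (\<Theta>*T, y)) has_derivative (\<lambda>w. (0, w))) (at y)"
          by (intro derivative_eq_intros) auto
      qed (use True psi_flat in auto)
      have outw: "points_outward (lens_part T R1 R2 \<Theta>) (\<Theta>*T, y) (1, 0)"
        unfolding points_outward_def
      proof (intro exI[of _ "\<Theta>*T"] conjI allI impI)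
        show "\<Theta>*T > 0" using Th T by simp
        fix s' :: real assume s': "0 < s' \<and> s' < \<Theta>*T"
        show "(\<Theta>*T, y) + s' *\<^sub>R (1, 0) \<notin> lens_part T R1 R2 \<Theta>"
        proof
          assume "(\<Theta>*T, y) + s' *\<^sub>R (1, 0) \<in> lens_part T R1 R2 \<Theta>"
          then obtain \<tau> where "\<tau> \<in> {0..\<Theta>}" "\<Theta>*T + s' = \<tau>*T"
            using True by (auto simp: mem_lens_part)
          moreover have "\<tau> * T \<le> \<Theta> * T" using calculation T by (intro mult_right_mono) auto
          ultimately show False using s' by linarith
        qed
        have "(\<Theta>*T - s', y) \<in> lens_part T R1 R2 \<Theta>"
          unfolding mem_lens_part using True yR2 s' T
          by (auto intro!: bexI[of _ "\<Theta> - s'/T"] simp: algebra_simps divide_simps)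
        then show "(\<Theta>*T, y) - s' *\<^sub>R (1, 0) \<in> lens_part T R1 R2 \<Theta>" by simp
      qed
      have quad: "cinner (cvec \<eta>) (symb A (\<Theta>*T) y (1,0) *v cvec \<eta>) \<in> \<real> \<and>
                   Re (cinner (cvec \<eta>) (symb A (\<Theta>*T) y (1,0) *v cvec \<eta>)) \<ge> 1/2 * (norm \<eta>)\<^sup>2" for \<eta> :: "real^'m"
      proof (rule quad_bound)
        show "\<forall>j. hermitian (A j (\<Theta> * T) y)" using herm Th T by simp
      qed (use C in auto)
      show ?thesis unfolding p Let_def nu using der outw quad by auto
    next
      case False
      define r where "r = norm y"
      have r1: "r > R1" and r2: "r < R2" using False yR1 yR2 unfolding r_def by auto
      have r0: "r > 0" using r1 R1 RA by linarith
      have y0: "y \<noteq> 0" using r0 unfolding r_def by auto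
      define t where "t = k * (R2 - r)"
      have t0: "t > 0" unfolding t_def using k0 r2 by simp
      have tT: "t \<le> T"
      proof -
        have "t \<le> k * (R2 - R1)" unfolding t_def using k0 r1 by (intro mult_left_mono) auto
        also have "\<dots> = \<Theta> * T" unfolding k_def using R12p by simp
        also have "\<dots> \<le> T" using Th T by simp
        finally show ?thesis .
      qed
      define b where "b = (k/(N*r)) *\<^sub>R y"
      have p: "lens_psi T R1 R2 \<Theta> y = (t, y)" unfolding t_def r_def using r1 r_def by (intro psi_slope) simp
      have nu: "\<nu> (t, y) = (1/N, b)" unfolding \<nu>_def \<nu>y_def b_def r_def using r1 r_def by simp
      have der0: "((\<lambda>y. (k*(R2 - norm y), y)) has_derivative (\<lambda>w. (k*(0 - w \<bullet> sgn y), w))) (at y)"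
        by (intro has_derivative_Pair has_derivative_mult_right has_derivative_diff has_derivative_const
            has_derivative_norm[OF y0] has_derivative_ident)
      have der: "(lens_psi T R1 R2 \<Theta> has_derivative (\<lambda>w. (k*(0 - w \<bullet> sgn y), w))) (at y)"
      proof (rule has_derivative_transform_within_open[where s="- cball 0 R1", OF der0])
        show "y \<in> - cball 0 R1" using r1 r_def by simp
        fix x :: "real^'n" assume "x \<in> - cball 0 R1"
        then show "(k * (R2 - norm x), x) = lens_psi T R1 R2 \<Theta> x"
          using psi_slope[of x] by (simp add: not_le)
      qed (simp add: open_Compl)
      have orth: "inner (1/N, b) (k*(0 - w \<bullet> sgn y), w) = 0" for w
        unfolding b_def using r0 N1
        by (simp add: sgn_div_norm r_def[symmetric] inner_commute field_simps)
      have nb: "norm b = k / N" unfolding b_def using r0 k0 N1 by (simp add: r_def[symmetric])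
      have nnu: "norm (1/N, b) = 1"
      proof -
        have "(norm (1/N))\<^sup>2 + (norm b)\<^sup>2 = (1 + k\<^sup>2) / N\<^sup>2" using N1 unfolding nb
          by (simp add: power_divide add_divide_distrib)
        also have "\<dots> = 1"
        proof -
          have "1 + k\<^sup>2 > 0" by (smt (verit) zero_le_power2)
          then show ?thesis using NN by simp
        qed
        finally show ?thesis unfolding norm_prod_def by simp
      qed
      have sumb: "(\<Sum>j\<in>UNIV. \<bar>b $ j\<bar>) \<le> k * sqrt (real CARD('n)) / N"
      proof -
        have "(\<Sum>j\<in>UNIV. \<bar>b $ j\<bar>) = k/(N*r) * (\<Sum>j\<in>UNIV. \<bar>y $ j\<bar>)"
          unfolding b_def using k0 N1 r0 by (simp add: abs_mult sum_distrib_left)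
        also have "\<dots> \<le> k/(N*r) * (sqrt (real CARD('n)) * r)"
          using sum_abs_le[of y] k0 N1 r0 unfolding r_def by (intro mult_left_mono) auto
        also have "\<dots> = k * sqrt (real CARD('n)) / N" using r0 by simp
        finally show ?thesis .
      qed
      have ab: "1/N - C * (\<Sum>j\<in>UNIV. \<bar>b $ j\<bar>) \<ge> 1/2"
      proof -
        have "C * (\<Sum>j\<in>UNIV. \<bar>b $ j\<bar>) \<le> C * (k * sqrt (real CARD('n)) / N)"
          using sumb C by (rule mult_left_mono)
        also have "\<dots> = k * s / N" unfolding s_def by simp
        finally have c1: "C * (\<Sum>j\<in>UNIV. \<bar>b $ j\<bar>) \<le> k * s / N" .
        have "1/2 \<le> (1 - k * s) / N" using Nk k1 N1 by (simp add: field_simps)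
        also have "\<dots> = 1 / N - k * s / N" by (simp add: diff_divide_distrib)
        finally show ?thesis using c1 by linarith
      qed
      have quad: "cinner (cvec \<eta>) (symb A t y (1/N,b) *v cvec \<eta>) \<in> \<real> \<and>
                   Re (cinner (cvec \<eta>) (symb A t y (1/N,b) *v cvec \<eta>)) \<ge> 1/2 * (norm \<eta>)\<^sup>2" for \<eta> :: "real^'m"
      proof (rule quad_bound)
        show "\<forall>j. hermitian (A j t y)" using herm t0 tT by simp
        show "snd (1 / N, b) = 0 \<or> (\<forall>j. onorm ((*v) (A j t y)) \<le> C)"
          using bound t0 tT r1 R1 r_def by auto
      qed (use C ab in auto)
      have outw: "points_outward (lens_part T R1 R2 \<Theta>) (t, y) (1/N, b)"
        unfolding points_outward_def
      proof (intro exI[of _ "min (N*t) (N*(r-R1)/k)"] conjI allI impI)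
        show "min (N*t) (N*(r-R1)/k) > 0" using N1 t0 r1 k0 by simp
        fix s' :: real assume s': "0 < s' \<and> s' < min (N*t) (N*(r-R1)/k)"
        have s1: "s'/N < t" using s' N1 by (simp add: field_simps)
        have s2: "s'*k/N < r - R1" using s' N1 k0 by (simp add: field_simps)
        have s3: "s'*k/N > 0" "s'/N > 0" using s' N1 k0 by auto
        define r' where "r' = r + s'*k/N"
        have e1: "y + s' *\<^sub>R b = (1 + s'*k/(N*r)) *\<^sub>R y" unfolding b_def by (simp add: algebra_simps)
        have n1: "norm ((1 + s'*k/(N*r)) *\<^sub>R y) = r'"
          unfolding r'_def using s' k0 N1 r0 by (simp add: r_def[symmetric] distrib_right)
        show "(t, y) + s' *\<^sub>R (1/N, b) \<notin> lens_part T R1 R2 \<Theta>"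
        proof
          assume "(t, y) + s' *\<^sub>R (1/N, b) \<in> lens_part T R1 R2 \<Theta>"
          then have "(t + s'/N, (1 + s'*k/(N*r)) *\<^sub>R y) \<in> lens_part T R1 R2 \<Theta>"
            using e1 by simp
          then have r'2: "r' \<le> R2" and "\<exists>\<tau>\<in>{0..\<Theta>}. t + s'/N = \<tau>*T*(R2 - r')/(R2-R1)"
            unfolding mem_lens_part n1 using r1 s3 unfolding r'_def by auto
          then obtain \<tau> where tau: "\<tau> \<in> {0..\<Theta>}" "t + s'/N = \<tau>*T*(R2 - r')/(R2-R1)" by blast
          have "\<tau>*T*(R2 - r')/(R2-R1) \<le> \<Theta>*T*(R2 - r')/(R2-R1)"
            using tau(1) T r'2 R12p by (intro divide_right_mono mult_right_mono) auto
          also have "\<dots> = k * (R2 - r')" unfolding k_def by simp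
          also have "\<dots> = t - k * (s'*k/N)" unfolding t_def r'_def by (simp add: algebra_simps)
          also have "\<dots> \<le> t" using mult_nonneg_nonneg[of k "s'*k/N"] k0 s3 by linarith
          finally show False using tau(2) s3 by linarith
        qed
        define r'' where "r'' = r - s'*k/N"
        define X where "X = t + s'*k*k/N"
        have X0: "X > 0" unfolding X_def using t0 s' k0 N1 by (simp add: add_pos_nonneg)
        have e2: "y - s' *\<^sub>R b = (1 - s'*k/(N*r)) *\<^sub>R y" unfolding b_def by (simp add: algebra_simps)
        have f0: "s'*k/(N*r) < 1"
        proof -
          have "s'*k/N < r" using s2 r1 R1 RA by linarith
          then have "s'*k < N*r" using N1 by (simp add: field_simps)
          then show ?thesis using N1 r0 by (simp add: field_simps)
        qed
        have n2: "norm ((1 - s'*k/(N*r)) *\<^sub>R y) = r''"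
          unfolding r''_def using f0 r0 N1 by (simp add: r_def[symmetric] left_diff_distrib)
        have r''1: "r'' > R1" and r''2: "r'' \<le> R2" unfolding r''_def using s2 s3 r2 by auto
        define \<tau> where "\<tau> = \<Theta> * (t - s'/N) / X"
        have tau0: "\<tau> \<ge> 0" unfolding \<tau>_def using Th X0 s1 by simp
        have tau1: "\<tau> \<le> \<Theta>"
        proof -
          have "s'*k*k/N \<ge> 0" using s' k0 N1 by simp
          then have "t - s'/N \<le> X" unfolding X_def using s3 by linarith
          then have "(t - s'/N) / X \<le> 1" using X0 by simp
          then show ?thesis unfolding \<tau>_def using Th mult_left_mono[of "(t - s'/N)/X" 1 \<Theta>] by simp
        qed
        have "\<Theta>*T*(R2 - r'')/(R2-R1) = k * (R2 - r'')" unfolding k_def by simp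
        also have "\<dots> = X" unfolding X_def t_def r''_def by (simp add: algebra_simps)
        finally have eX: "\<Theta>*T*(R2 - r'')/(R2-R1) = X" .
        have "\<tau>*T*(R2 - r'')/(R2-R1) = (t - s'/N) / X * (\<Theta>*T*(R2 - r'')/(R2-R1))"
          unfolding \<tau>_def by simp
        also have "\<dots> = t - s'/N" unfolding eX using X0 by simp
        finally have eq: "t - s'/N = \<tau>*T*(R2 - r'')/(R2-R1)" by simp
        have "(t - s'/N, (1 - s'*k/(N*r)) *\<^sub>R y) \<in> lens_part T R1 R2 \<Theta>"
          unfolding mem_lens_part n2 using r''1 r''2 tau0 tau1 eq by auto
        then show "(t, y) - s' *\<^sub>R (1/N, b) \<in> lens_part T R1 R2 \<Theta>"
          using e2 by simp
      qed
      show ?thesis unfolding p Let_def nu using der orth nnu outw quad by auto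
    qed
  qed
  show ?thesis
    apply (rule exI[of _ \<nu>], rule exI[of _ E])
    using En \<open>?MAIN\<close> by (rule conjI)
qed

theorem lemma2p4:
  fixes A :: "'n::finite \<Rightarrow> real \<Rightarrow> real^'n \<Rightarrow> complex^'m::finite^'m"
    and T C RA R1 R2 :: real
  assumes herm: "\<forall>j t x. t \<in> {0..T} \<longrightarrow> hermitian (A j t x)"
    and bound: "\<forall>j t x. t \<in> {0..T} \<and> norm x \<ge> RA \<longrightarrow> onorm (\<lambda>v. A j t x *v v) \<le> C"
    and C: "C \<ge> 0" and RA: "RA > 0" and T: "T > 0"
    and R1: "R1 \<ge> RA"
    and R2: "R2 \<ge> R1 + T * (1 + 2 * sqrt (real CARD('n)) * C)"
  shows "\<forall>\<Theta>\<in>{0<..1}. \<exists>\<nu> :: real \<times> (real^'n) \<Rightarrow> real \<times> (real^'n). \<exists>E :: (real^'n) set.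
           E \<in> null_sets lborel \<and>
           (\<forall>y \<in> cball 0 R2 - E.
              let p = lens_psi T R1 R2 \<Theta> y in
              (\<exists>D. (lens_psi T R1 R2 \<Theta> has_derivative D) (at y) \<and> (\<forall>w. inner (\<nu> p) (D w) = 0))
              \<and> norm (\<nu> p) = 1
              \<and> points_outward (lens_part T R1 R2 \<Theta>) p (\<nu> p)
              \<and> (\<forall>\<eta> :: real^'m.
                   cinner (cvec \<eta>) (symb A (fst p) (snd p) (\<nu> p) *v cvec \<eta>) \<in> \<real> \<and>
                   Re (cinner (cvec \<eta>) (symb A (fst p) (snd p) (\<nu> p) *v cvec \<eta>)) \<ge> 1/2 * (norm \<eta>)\<^sup>2))"
    apply (intro ballI)
  apply (rule main_fixed[OF herm bound C RA T R1 R2])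
   apply auto
  done

end
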